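(* Let $H=\Theta(2,4,4)$ and $G=H^2$. Then $G$ is equitably $5$-choosable.
   Context: $\Theta(l_1,\ldots,l_m)$ denotes the graph consisting of two vertices $u,w$ joined by $m$ internally disjoint paths of lengths $l_1,\ldots,l_m$. For a graph $H$, $H^2$ has vertex set $V(H)$ with two vertices adjacent iff their distance in $H$ is 1 or 2. A $k$-assignment $L$ assigns to each vertex a set of exactly $k$ colors; an equitable $L$-coloring of $G$ is a proper coloring $f$ with $f(v)\in L(v)$ such that no color is used more than $\lceil |V(G)|/k\rceil$ times; $G$ is equitably $k$-choosable if it has an equitable $L$-coloring for every $k$-assignment $L$. *)

theory Defs
  imports Complex_Main
begin

text \<open>Simple graphs are given by a vertex set V and a symmetric adjacency relation E.\<close>

datatype tvert = TU | TW | TI nat nat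

text \<open>Theta graph Theta(l_1,...,l_m): vertices u = TU, w = TW, and interior vertices
  TI i j (path i, position j, 1 <= j <= l_i - 1) of the i-th u-w path of length l_i.\<close>

definition theta_verts :: "nat list \<Rightarrow> tvert set" where
  "theta_verts ls = {TU, TW} \<union> {TI i j | i j. i < length ls \<and> 1 \<le> j \<and> j < ls ! i}"

definition theta_pos :: "nat list \<Rightarrow> nat \<Rightarrow> nat \<Rightarrow> tvert" where
  "theta_pos ls i p = (if p = 0 then TU else if p = ls ! i then TW else TI i p)"

definition theta_adj :: "nat list \<Rightarrow> tvert \<Rightarrow> tvert \<Rightarrow> bool" where
  "theta_adj ls x y = (\<exists>i p. i < length ls \<and> p < ls ! i \<and>
      ((x = theta_pos ls i p \<and> y = theta_pos ls i (Suc p)) \<or>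
       (y = theta_pos ls i p \<and> x = theta_pos ls i (Suc p))))"

definition sq_adj :: "'a set \<Rightarrow> ('a \<Rightarrow> 'a \<Rightarrow> bool) \<Rightarrow> 'a \<Rightarrow> 'a \<Rightarrow> bool" where
  "sq_adj V E x y = (x \<in> V \<and> y \<in> V \<and> x \<noteq> y \<and> (E x y \<or> (\<exists>z\<in>V. E x z \<and> E z y)))"

definition k_assignment :: "'a set \<Rightarrow> nat \<Rightarrow> ('a \<Rightarrow> 'c set) \<Rightarrow> bool" where
  "k_assignment V k L = (\<forall>v\<in>V. finite (L v) \<and> card (L v) = k)"

definition equitable_L_coloring ::
  "'a set \<Rightarrow> ('a \<Rightarrow> 'a \<Rightarrow> bool) \<Rightarrow> nat \<Rightarrow> ('a \<Rightarrow> 'c set) \<Rightarrow> ('a \<Rightarrow> 'c) \<Rightarrow> bool" where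
  "equitable_L_coloring V E k L f =
     ((\<forall>v\<in>V. f v \<in> L v) \<and>
      (\<forall>x\<in>V. \<forall>y\<in>V. E x y \<longrightarrow> f x \<noteq> f y) \<and>
      (\<forall>c. card {v\<in>V. f v = c} \<le> nat \<lceil>real (card V) / real k\<rceil>))"

text \<open>Equitable k-choosability; colours are natural numbers (any countable supply suffices).\<close>
definition equitably_choosable :: "'a set \<Rightarrow> ('a \<Rightarrow> 'a \<Rightarrow> bool) \<Rightarrow> nat \<Rightarrow> bool" where
  "equitably_choosable V E k =
     (\<forall>L :: 'a \<Rightarrow> nat set. k_assignment V k L \<longrightarrow> (\<exists>f. equitable_L_coloring V E k L f))"

end

theory Submission
  imports Defs
begin


abbreviation "VV \<equiv> {TU, TW, TI 0 1, TI 1 1, TI 1 2, TI 1 3, TI 2 1, TI 2 2, TI 2 3}"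

lemma exS: "(\<exists>p<Suc n. P p) \<longleftrightarrow> P n \<or> (\<exists>p<n. P p)"
  by (auto simp: less_Suc_eq)

lemma verts: "theta_verts [2,4,4] = VV"
  unfolding theta_verts_def
  by (auto simp: less_Suc_eq numeral_eq_Suc nth_Cons')

definition H :: "(tvert \<times> tvert) set" where
 "H = {(TU, TI 0 1), (TI 0 1, TW), (TU, TI 1 1), (TI 1 1, TI 1 2), (TI 1 2, TI 1 3), (TI 1 3, TW),
       (TU, TI 2 1), (TI 2 1, TI 2 2), (TI 2 2, TI 2 3), (TI 2 3, TW)}"

lemma adj: "theta_adj [2,4,4] x y \<longleftrightarrow> (x,y) \<in> H \<or> (y,x) \<in> H"
proof -
  have "theta_adj [2,4,4] x y \<longleftrightarrow> (\<exists>i<Suc (Suc (Suc 0)). \<exists>p<[2,4,4]!i. 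
      ((x = theta_pos [2,4,4] i p \<and> y = theta_pos [2,4,4] i (Suc p)) \<or>
       (y = theta_pos [2,4,4] i p \<and> x = theta_pos [2,4,4] i (Suc p))))"
    unfolding theta_adj_def by simp
  also have "\<dots> \<longleftrightarrow> (x,y) \<in> H \<or> (y,x) \<in> H"
    unfolding H_def theta_pos_def
    by (simp add: numeral_eq_Suc exS) (auto)
  finally show ?thesis .
qed



definition GE :: "(tvert \<times> tvert) set" where
 "GE = {(TU, TI 0 1), (TU, TI 1 1), (TU, TI 2 1), (TU, TW), (TU, TI 1 2), (TU, TI 2 2),
        (TW, TI 0 1), (TW, TI 1 3), (TW, TI 2 3), (TW, TI 1 2), (TW, TI 2 2),
        (TI 0 1, TI 1 1), (TI 0 1, TI 2 1), (TI 0 1, TI 1 3), (TI 0 1, TI 2 3),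
        (TI 1 1, TI 1 2), (TI 1 1, TI 2 1), (TI 1 1, TI 1 3), (TI 1 2, TI 1 3),
        (TI 1 3, TI 2 3), (TI 2 1, TI 2 2), (TI 2 1, TI 2 3), (TI 2 2, TI 2 3)}"

fun N :: "tvert \<Rightarrow> tvert set" where
  "N TU = {TI 0 1, TI 1 1, TI 2 1}"
| "N TW = {TI 0 1, TI 1 3, TI 2 3}"
| "N (TI i j) = (if i = 0 then {TU, TW} else if j = 1 then {TU, TI i 2}
      else if j = 2 then {TI i 1, TI i 3} else {TI i 2, TW})"

lemma adjN: "x \<in> VV \<Longrightarrow> theta_adj [2,4,4] x y \<longleftrightarrow> y \<in> N x"
  unfolding adj H_def by (elim insertE; simp; blast)

lemma sq: "sq_adj (theta_verts [2,4,4]) (theta_adj [2,4,4]) x y \<Longrightarrow> (x,y) \<in> GE \<or> (y,x) \<in> GE"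
proof -
  assume A: "sq_adj (theta_verts [2,4,4]) (theta_adj [2,4,4]) x y"
  have x: "x \<in> VV" and y: "y \<in> VV" and ne: "x \<noteq> y"
    and D: "theta_adj [2,4,4] x y \<or> (\<exists>z\<in>VV. theta_adj [2,4,4] x z \<and> theta_adj [2,4,4] z y)"
    using A unfolding sq_adj_def verts[symmetric] by blast+
  have D2: "y \<in> N x \<or> (\<exists>z\<in>N x. y \<in> N z)"
    using D adjN[OF x] adjN by blast
  show ?thesis
    using x D2 ne unfolding GE_def 
    by (elim insertE emptyE; simp; elim disjE; simp)
qed

definition NE :: "(tvert \<times> tvert) set" where
 "NE = {(TU, TI 1 3), (TU, TI 2 3), (TW, TI 1 1), (TW, TI 2 1), (TI 0 1, TI 1 2), (TI 0 1, TI 2 2), (TI 1 1, TI 2 2), (TI 1 1, TI 2 3), (TI 1 2, TI 2 1), (TI 1 2, TI 2 2), (TI 1 2, TI 2 3), (TI 1 3, TI 2 1), (TI 1 3, TI 2 2), (TI 1 3, TU), (TI 2 3, TU), (TI 1 1, TW), (TI 2 1, TW), (TI 1 2, TI 0 1), (TI 2 2, TI 0 1), (TI 2 2, TI 1 1), (TI 2 3, TI 1 1), (TI 2 1, TI 1 2), (TI 2 2, TI 1 2), (TI 2 3, TI 1 2), (TI 2 1, TI 1 3), (TI 2 2, TI 1 3)}"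

lemma t2: "x \<in> VV \<Longrightarrow> x = TU \<or> x = TW \<or> x = TI 0 1 \<or> x = TI 1 1 \<or> x = TI 1 2 \<or> x = TI 1 3 \<or> x = TI 2 1 \<or> x = TI 2 2 \<or> x = TI 2 3"
  by simp
lemma VV_GE: assumes "x \<in> VV" "y \<in> VV" "x \<noteq> y" shows "(x,y) \<in> GE \<or> (y,x) \<in> GE \<or> (x,y) \<in> NE"
  using t2[OF assms(1)] t2[OF assms(2)] assms(3) unfolding GE_def NE_def
  by (elim disjE; simp)
lemma tri0: "(x,y) \<in> NE \<Longrightarrow> (x,z) \<in> NE \<longrightarrow> (y,z) \<in> NE \<longrightarrow> {x,y,z} = {TI 0 1, TI 1 2, TI 2 2}"
  unfolding NE_def
  apply (elim insertE emptyE)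
  apply (simp_all only: prod.inject)
  apply (elim conjE; simp; blast?)+
  done
lemma tri: "(x,y) \<in> NE \<Longrightarrow> (x,z) \<in> NE \<Longrightarrow> (y,z) \<in> NE \<Longrightarrow> {x,y,z} = {TI 0 1, TI 1 2, TI 2 2}"
  using tri0 by blast
lemma card4: "card {p,q,r,s::'c} \<le> 4"
  using card_length[of "[p,q,r,s]"] by simp

lemma pick: assumes "finite A" "card A = 5" shows "\<exists>c\<in>A. c \<notin> {p,q,r,s}"
proof (rule ccontr)
  assume "\<not> ?thesis"
  then have "A \<subseteq> {p,q,r,s}" by blast
  then have "card A \<le> card {p,q,r,s}" by (rule card_mono[rotated]) simp
  with card4[of p q r s] assms show False by simp
qed

lemma pick2: assumes "finite A" "card A = 5"
  shows "\<exists>t1 t2. t1\<in>A \<and> t2\<in>A \<and> t1\<noteq>t2 \<and> t1\<notin>{p,q,r} \<and> t2\<notin>{p,q,r}"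
proof -
  obtain t1 where "t1 \<in> A" "t1 \<notin> {p,q,r,p}" using pick[OF assms] by blast
  moreover obtain t2 where "t2 \<in> A" "t2 \<notin> {p,q,r,t1}" using pick[OF assms] by blast
  ultimately show ?thesis by blast
qed

lemma three: assumes "finite A" "2 < card A"
  shows "\<exists>x y z. x\<in>A \<and> y\<in>A \<and> z\<in>A \<and> x\<noteq>y \<and> x\<noteq>z \<and> y\<noteq>z"
proof -
  have "A \<noteq> {}" using assms by auto
  then obtain x where x: "x \<in> A" by blast
  have "1 < card (A - {x})" using assms x by simp
  then have "A - {x} \<noteq> {}" by (metis card.empty not_less_zero)
  then obtain y where y: "y \<in> A - {x}" by blast
  have "0 < card (A - {x} - {y})" using assms x y by simp
  then have "A - {x} - {y} \<noteq> {}" by (metis card.empty less_irrefl)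
  then obtain z where z: "z \<in> A - {x} - {y}" by blast
  show ?thesis using x y z by blast
qed

theorem lemma3p5:
  shows "equitably_choosable (theta_verts [2,4,4])
           (sq_adj (theta_verts [2,4,4]) (theta_adj [2,4,4])) 5"
  unfolding equitably_choosable_def
proof (intro allI impI)
  fix L :: "tvert \<Rightarrow> nat set"
  assume "k_assignment (theta_verts [2, 4, 4]) 5 L"
  then have LL: "\<And>v. v \<in> VV \<Longrightarrow> finite (L v) \<and> card (L v) = 5"
    unfolding k_assignment_def verts by blast
  have Lu: "finite (L TU)" "card (L TU) = 5" using LL by auto
  have Lw: "finite (L TW)" "card (L TW) = 5" using LL by auto
  have La: "finite (L (TI 0 1))" "card (L (TI 0 1)) = 5" using LL by auto
  have Lx1: "finite (L (TI 1 1))" "card (L (TI 1 1)) = 5" using LL by auto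
  have Lx2: "finite (L (TI 1 2))" "card (L (TI 1 2)) = 5" using LL by auto
  have Lx3: "finite (L (TI 1 3))" "card (L (TI 1 3)) = 5" using LL by auto
  have Ly1: "finite (L (TI 2 1))" "card (L (TI 2 1)) = 5" using LL by auto
  have Ly2: "finite (L (TI 2 2))" "card (L (TI 2 2)) = 5" using LL by auto
  have Ly3: "finite (L (TI 2 3))" "card (L (TI 2 3)) = 5" using LL by auto
  obtain cu where cu: "cu \<in> L TU" using pick[OF Lu] by blast
  obtain cw where cw: "cw \<in> L TW" "cw \<notin> {cu,cu,cu,cu}" using pick[OF Lw] by blast
  obtain ca where ca: "ca \<in> L (TI 0 1)" "ca \<notin> {cu,cw,cw,cw}" using pick[OF La] by blast
  obtain t1 t2 where t: "t1 \<in> L (TI 1 2)" "t2 \<in> L (TI 1 2)" "t1 \<noteq> t2"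
     "t1 \<notin> {cu,cw,ca}" "t2 \<notin> {cu,cw,ca}" using pick2[OF Lx2] by blast
  obtain cx1 where cx1: "cx1 \<in> L (TI 1 1)" "cx1 \<notin> {cu,ca,t1,t2}" using pick[OF Lx1] by blast
  obtain cx3 where cx3: "cx3 \<in> L (TI 1 3)" "cx3 \<notin> {cw,cx1,ca,ca}" using pick[OF Lx3] by blast
  obtain cy1 where cy1: "cy1 \<in> L (TI 2 1)" "cy1 \<notin> {cu,ca,cx1,cx1}" using pick[OF Ly1] by blast
  obtain cy3 where cy3: "cy3 \<in> L (TI 2 3)" "cy3 \<notin> {cw,ca,cx3,cy1}" using pick[OF Ly3] by blast
  obtain cx2 where cx2: "cx2 \<in> L (TI 1 2)" "cx2 \<noteq> cu" "cx2 \<noteq> cw" "cx2 \<noteq> ca"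
     "cx2 \<noteq> cx1" "cx2 \<noteq> cx3"
    using t cx1 by (cases "t1 = cx3") auto
  obtain cy2 where cy2: "cy2 \<in> L (TI 2 2)" "cy2 \<notin> {cy1,cy3,cu,cw}" using pick[OF Ly2] by blast
  define f where "f v = (if v = TU then cu else if v = TW then cw else if v = TI 0 1 then ca
     else if v = TI 1 1 then cx1 else if v = TI 1 2 then cx2 else if v = TI 1 3 then cx3
     else if v = TI 2 1 then cy1 else if v = TI 2 2 then cy2 else cy3)" for v
  have fs: "f TU = cu" "f TW = cw" "f (TI 0 1) = ca" "f (TI 1 1) = cx1" "f (TI 1 2) = cx2"
    "f (TI 1 3) = cx3" "f (TI 2 1) = cy1" "f (TI 2 2) = cy2" "f (TI 2 3) = cy3"
    by (simp_all add: f_def)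
  have ne: "cw \<noteq> cu" "ca \<noteq> cu" "ca \<noteq> cw" "cx1 \<noteq> cu" "cx1 \<noteq> ca"
     "cx3 \<noteq> cw" "cx3 \<noteq> cx1" "cx3 \<noteq> ca" "cy1 \<noteq> cu" "cy1 \<noteq> ca" "cy1 \<noteq> cx1"
     "cy3 \<noteq> cw" "cy3 \<noteq> ca" "cy3 \<noteq> cx3" "cy3 \<noteq> cy1"
     "cy2 \<noteq> cy1" "cy2 \<noteq> cy3" "cy2 \<noteq> cu" "cy2 \<noteq> cw"
    using cw ca cx1 cx3 cy1 cy3 cy2 by simp_all
  have c1: "\<forall>v\<in>theta_verts [2,4,4]. f v \<in> L v"
    unfolding verts using cu cw(1) ca(1) cx1(1) cx2(1) cx3(1) cy1(1) cy2(1) cy3(1) fs by simp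
  have GEok: "f x \<noteq> f y" if "(x,y) \<in> GE" for x y
    using that unfolding GE_def
    apply (simp only: insert_iff empty_iff prod.inject)
    apply (elim disjE conjE)
    by (simp_all add: fs fs[simplified] ne cx2(2-6) cx2(2-6)[THEN not_sym] ne[THEN not_sym])
  have G': "\<And>x y. (x,y) \<in> GE \<or> (y,x) \<in> GE \<Longrightarrow> f x \<noteq> f y" using GEok by metis
  have c2: "\<forall>x\<in>theta_verts [2,4,4]. \<forall>y\<in>theta_verts [2,4,4].
        sq_adj (theta_verts [2,4,4]) (theta_adj [2,4,4]) x y \<longrightarrow> f x \<noteq> f y"
    using sq G' by metis
  have notri: "\<And>x y z. x\<in>VV \<Longrightarrow> y\<in>VV \<Longrightarrow> z\<in>VV \<Longrightarrow> x\<noteq>y \<Longrightarrow> x\<noteq>z \<Longrightarrow> y\<noteq>z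
      \<Longrightarrow> f x = f y \<Longrightarrow> f y = f z \<Longrightarrow> False"
  proof -
    fix x y z
    assume A: "x\<in>VV" "y\<in>VV" "z\<in>VV" "x\<noteq>y" "x\<noteq>z" "y\<noteq>z" "f x = f y" "f y = f z"
    have 1: "(x,y) \<in> NE" using VV_GE[of x y] A G'[of x y] by blast
    have 2: "(x,z) \<in> NE" using VV_GE[of x z] A G'[of x z] by metis
    have 3: "(y,z) \<in> NE" using VV_GE[of y z] A G'[of y z] by blast
    have T: "{x,y,z} = {TI 0 1, TI 1 2, TI 2 2}" by (rule tri[OF 1 2 3])
    have "TI 0 1 \<in> {x,y,z}" "TI 1 2 \<in> {x,y,z}" unfolding T by simp_all
    then have "f (TI 0 1) = f (TI 1 2)" using A(7,8) by auto
    then show False using fs cx2 by simp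
  qed
  have c3: "card {v\<in>theta_verts [2,4,4]. f v = c} \<le> nat \<lceil>real (card (theta_verts [2,4,4])) / real 5\<rceil>" for c
  proof -
    have cv: "card VV = 9" by simp
    have "nat \<lceil>real (card VV) / real 5\<rceil> = 2" unfolding cv by simp
    moreover have "card {v\<in>VV. f v = c} \<le> 2"
    proof (rule ccontr)
      assume "\<not> ?thesis"
      then have gt: "2 < card {v\<in>VV. f v = c}" by (simp only: not_le)
      have fin: "finite {v\<in>VV. f v = c}" by (rule finite_subset[of _ VV]) auto
      obtain x y z where "x\<in>{v\<in>VV. f v = c}" "y\<in>{v\<in>VV. f v = c}" "z\<in>{v\<in>VV. f v = c}"
         "x\<noteq>y" "x\<noteq>z" "y\<noteq>z" using three[OF fin gt] by blast
      then show False using notri unfolding mem_Collect_eq by metis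
    qed
    ultimately show ?thesis unfolding verts by (simp only: of_nat_numeral)
  qed
  show "\<exists>f. equitable_L_coloring (theta_verts [2, 4, 4])
              (sq_adj (theta_verts [2, 4, 4]) (theta_adj [2, 4, 4])) 5 L f"
    unfolding equitable_L_coloring_def using c1 c2 c3 by blast
qed

end
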